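(* Let $A,A^*\in\mathrm{End}(\mathcal V)$ satisfy the Askey–Wilson relations $$[A,[A,A^*]_q]_{q^{-1}}=\rho A^*+\omega A+\eta\,\mathbb I,\qquad [A^*,[A^*,A]_q]_{q^{-1}}=\rho A+\omega A^*+\eta^*\,\mathbb I$$ with structure constants $$\rho=-\frac{(q^2-q^{-2})^2}{r_0^2},\quad \omega=\omega^{\{\cdot,*,\diamond\}},\quad \eta=\frac{q+q^{-1}}{r_0}\,\omega^{\{\cdot,\diamond,*\}},\quad \eta^*=\frac{q+q^{-1}}{r_0}\,\omega^{\{*,\diamond,\cdot\}}.$$ Let $A^\diamond$ be defined as below. Then for every ordered pair $(a,b)$ of distinct labels in $\{\cdot,*,\diamond\}$, with $c$ the remaining label, $$[A^a,[A^a,A^b]_q]_{q^{-1}}=-\frac{(q^2-q^{-2})^2}{r_0^2}A^b+\omega^{\{a,b,c\}}A^a+\frac{q+q^{-1}}{r_0}\,\omega^{\{a,c,b\}}\,\mathbb I .$$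
   Context: $q\in\mathbb C^*$ is not a root of unity, $s\in\{0,\tfrac12,1,\tfrac32,\dots\}$, and $\mathcal V$ is a complex vector space of dimension $2s+1$ with identity $\mathbb I$. Notation: $[X,Y]_q=qXY-q^{-1}YX$. Labels $a$ range over $\{\cdot,*,\diamond\}$; we write $A^{\cdot}=A$, $\mathsf b^{\cdot}=\mathsf b$, $\mathsf c^{\cdot}=\mathsf c$. Fix nonzero complex numbers $r_0$, $\mathsf b^a,\mathsf c^a$ ($a\in\{\cdot,*,\diamond\}$) with $r_0^{-2}=\mathsf b\mathsf c=\mathsf b^*\mathsf c^*=\mathsf b^\diamond\mathsf c^\diamond$. Put $\theta^a_M=\mathsf b^aq^{2M}+\mathsf c^aq^{-2M}$ (so $\theta^a_s=\mathsf b^aq^{2s}+\mathsf c^aq^{-2s}$), and for pairwise distinct labels $a,b,c$, $\omega^{\{a,b,c\}}=-(q-q^{-1})^2\big(\theta^a_s\theta^b_s-r_0^{-1}(q^{2s+1}+q^{-2s-1})\theta^c_s\big)$. Define $A^\diamond=\frac{r_0}{q^2-q^{-2}}[A^*,A]_q+\frac{r_0\,\omega^{\{\cdot,*,\diamond\}}}{(q-q^{-1})(q^2-q^{-2})}\mathbb I$. *)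

theory Defs
  imports "Jordan_Normal_Form.Matrix"
begin

datatype label = Dot | Star | Diamond

definition qcomm :: "complex \<Rightarrow> complex mat \<Rightarrow> complex mat \<Rightarrow> complex mat" where
  "qcomm q X Y = q \<cdot>\<^sub>m (X * Y) - inverse q \<cdot>\<^sub>m (Y * X)"

text \<open>theta^a_s = b^a q^{2s} + c^a q^{-2s}; the half-integer s is encoded by n = 2s.\<close>
definition theta_s :: "complex \<Rightarrow> nat \<Rightarrow> (label \<Rightarrow> complex) \<Rightarrow> (label \<Rightarrow> complex) \<Rightarrow> label \<Rightarrow> complex" where
  "theta_s q n bb cc a = bb a * q ^ n + cc a * inverse q ^ n"

definition omega :: "complex \<Rightarrow> complex \<Rightarrow> nat \<Rightarrow> (label \<Rightarrow> complex) \<Rightarrow> (label \<Rightarrow> complex)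
    \<Rightarrow> label \<Rightarrow> label \<Rightarrow> label \<Rightarrow> complex" where
  "omega q r0 n bb cc a b c =
     - ((q - inverse q)^2) * (theta_s q n bb cc a * theta_s q n bb cc b
        - inverse r0 * (q ^ (n+1) + inverse q ^ (n+1)) * theta_s q n bb cc c)"

definition Adiamond :: "complex \<Rightarrow> complex \<Rightarrow> nat \<Rightarrow> (label \<Rightarrow> complex) \<Rightarrow> (label \<Rightarrow> complex)
    \<Rightarrow> complex mat \<Rightarrow> complex mat \<Rightarrow> complex mat" where
  "Adiamond q r0 n bb cc A As =
     (r0 / (q^2 - inverse q ^ 2)) \<cdot>\<^sub>m qcomm q As A
     + (r0 * omega q r0 n bb cc Dot Star Diamond / ((q - inverse q) * (q^2 - inverse q ^ 2)))
       \<cdot>\<^sub>m 1\<^sub>m (n+1)"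

definition Alab :: "complex \<Rightarrow> complex \<Rightarrow> nat \<Rightarrow> (label \<Rightarrow> complex) \<Rightarrow> (label \<Rightarrow> complex)
    \<Rightarrow> complex mat \<Rightarrow> complex mat \<Rightarrow> label \<Rightarrow> complex mat" where
  "Alab q r0 n bb cc A As a =
     (case a of Dot \<Rightarrow> A | Star \<Rightarrow> As | Diamond \<Rightarrow> Adiamond q r0 n bb cc A As)"

end

theory Submission
  imports Defs
begin

context fixes m :: nat begin
abbreviation "CM \<equiv> carrier_mat m m :: complex mat set"

lemma cm_mult[simp]: "X \<in> CM \<Longrightarrow> Y \<in> CM \<Longrightarrow> X * Y \<in> CM" by auto
lemma cm_add[simp]: "X \<in> CM \<Longrightarrow> Y \<in> CM \<Longrightarrow> X + Y \<in> CM" by auto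
lemma cm_minus[simp]: "X \<in> CM \<Longrightarrow> Y \<in> CM \<Longrightarrow> X - Y \<in> CM" by auto
lemma cm_smult[simp]: "X \<in> CM \<Longrightarrow> c \<cdot>\<^sub>m X \<in> CM" by auto
lemma cm_one[simp]: "1\<^sub>m m \<in> CM" by auto

lemma d_addm: "X \<in> CM \<Longrightarrow> Y \<in> CM \<Longrightarrow> Z \<in> CM \<Longrightarrow> (X + Y) * Z = X * Z + Y * Z"
  by (rule add_mult_distrib_mat) auto
lemma d_maddm: "X \<in> CM \<Longrightarrow> Y \<in> CM \<Longrightarrow> Z \<in> CM \<Longrightarrow> Z * (X + Y) = Z * X + Z * Y"
  by (rule mult_add_distrib_mat) auto
lemma d_minm: "X \<in> CM \<Longrightarrow> Y \<in> CM \<Longrightarrow> Z \<in> CM \<Longrightarrow> (X - Y) * Z = X * Z - Y * Z"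
  by (rule minus_mult_distrib_mat) auto
lemma d_mminm: "X \<in> CM \<Longrightarrow> Y \<in> CM \<Longrightarrow> Z \<in> CM \<Longrightarrow> Z * (X - Y) = Z * X - Z * Y"
  by (rule mult_minus_distrib_mat) auto
lemma d_sm: "X \<in> CM \<Longrightarrow> Y \<in> CM \<Longrightarrow> (c \<cdot>\<^sub>m X) * Y = c \<cdot>\<^sub>m (X * Y)"
  by (rule mult_smult_assoc_mat) auto
lemma d_ms: "X \<in> CM \<Longrightarrow> Y \<in> CM \<Longrightarrow> X * (c \<cdot>\<^sub>m Y) = c \<cdot>\<^sub>m (X * Y)"
  by (rule mult_smult_distrib) auto
lemma d_assoc: "X \<in> CM \<Longrightarrow> Y \<in> CM \<Longrightarrow> Z \<in> CM \<Longrightarrow> (X * Y) * Z = X * (Y * Z)"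
  by (rule assoc_mult_mat) auto
lemma d_one1: "X \<in> CM \<Longrightarrow> 1\<^sub>m m * X = X" by auto
lemma d_one2: "X \<in> CM \<Longrightarrow> X * 1\<^sub>m m = X" by auto

lemmas dnorm = d_addm d_maddm d_minm d_mminm d_sm d_ms d_assoc d_one1 d_one2

lemma entry_simps:
  "X \<in> CM \<Longrightarrow> Y \<in> CM \<Longrightarrow> i < m \<Longrightarrow> j < m \<Longrightarrow> (X + Y) $$ (i,j) = X $$ (i,j) + Y $$ (i,j)"
  "X \<in> CM \<Longrightarrow> Y \<in> CM \<Longrightarrow> i < m \<Longrightarrow> j < m \<Longrightarrow> (X - Y) $$ (i,j) = X $$ (i,j) - Y $$ (i,j)"
  "X \<in> CM \<Longrightarrow> i < m \<Longrightarrow> j < m \<Longrightarrow> (c \<cdot>\<^sub>m X) $$ (i,j) = c * X $$ (i,j)"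
  by auto

lemma cm_eqI: "X \<in> CM \<Longrightarrow> Y \<in> CM \<Longrightarrow> (\<And>i j. i < m \<Longrightarrow> j < m \<Longrightarrow> X $$ (i,j) = Y $$ (i,j)) \<Longrightarrow> X = Y"
  by (rule eq_matI) auto

lemma qc_f:
  assumes X: "X \<in> CM" and Y: "Y \<in> CM" and q: "q \<noteq> 0"
  shows "qcomm q X (qcomm q Y X) = (-1) \<cdot>\<^sub>m qcomm (inverse q) X (qcomm q X Y)"
  unfolding qcomm_def
  apply (simp add: dnorm X Y)
  apply (rule cm_eqI)
    apply (simp_all add: X Y entry_simps del: index_mult_mat)
  apply (simp add: field_simps)
  done


lemma qc_f':
  assumes X: "X \<in> CM" and Y: "Y \<in> CM" and q: "q \<noteq> 0"
  shows "qcomm (inverse q) X (qcomm q X Y) = (-1) \<cdot>\<^sub>m qcomm q X (qcomm q Y X)"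
  unfolding qcomm_def
  apply (simp add: dnorm X Y)
  apply (rule cm_eqI)
    apply (simp_all add: X Y entry_simps del: index_mult_mat)
  apply (simp add: field_simps)
  done

lemma L_right:
  assumes X: "X \<in> CM" and Y: "Y \<in> CM" and q: "q \<noteq> 0"
  shows "qcomm (inverse q) X (qcomm q X (a \<cdot>\<^sub>m qcomm q Y X + b \<cdot>\<^sub>m 1\<^sub>m m))
     = a \<cdot>\<^sub>m qcomm q (qcomm (inverse q) X (qcomm q X Y)) X - (b*(q - inverse q)^2) \<cdot>\<^sub>m (X*X)"
  unfolding qcomm_def
  apply (simp add: dnorm X Y)
  apply (rule cm_eqI)
    apply (simp_all add: X Y entry_simps del: index_mult_mat)
  apply (simp add: field_simps power2_eq_square)
  done

lemma L_left:
  assumes X: "X \<in> CM" and Y: "Y \<in> CM" and q: "q \<noteq> 0"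
  shows "qcomm (inverse q) Y (qcomm q Y (a \<cdot>\<^sub>m qcomm q Y X + b \<cdot>\<^sub>m 1\<^sub>m m))
     = a \<cdot>\<^sub>m qcomm q Y (qcomm (inverse q) Y (qcomm q Y X)) - (b*(q - inverse q)^2) \<cdot>\<^sub>m (Y*Y)"
  unfolding qcomm_def
  apply (simp add: dnorm X Y)
  apply (rule cm_eqI)
    apply (simp_all add: X Y entry_simps del: index_mult_mat)
  apply (simp add: field_simps power2_eq_square)
  done

lemma comm_AC:
  assumes X: "X \<in> CM" and Y: "Y \<in> CM" and q: "q \<noteq> 0"
  shows "qcomm q X (a \<cdot>\<^sub>m qcomm q Y X + b \<cdot>\<^sub>m 1\<^sub>m m)
     = (-a) \<cdot>\<^sub>m qcomm (inverse q) X (qcomm q X Y) + (b*(q - inverse q)) \<cdot>\<^sub>m X"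
  unfolding qcomm_def
  apply (simp add: dnorm X Y)
  apply (rule cm_eqI)
    apply (simp_all add: X Y entry_simps del: index_mult_mat)
  apply (simp add: field_simps)
  done

lemma comm_CB:
  assumes X: "X \<in> CM" and Y: "Y \<in> CM" and q: "q \<noteq> 0"
  shows "qcomm q (a \<cdot>\<^sub>m qcomm q Y X + b \<cdot>\<^sub>m 1\<^sub>m m) Y
     = (-a) \<cdot>\<^sub>m qcomm (inverse q) Y (qcomm q Y X) + (b*(q - inverse q)) \<cdot>\<^sub>m Y"
  unfolding qcomm_def
  apply (simp add: dnorm X Y)
  apply (rule cm_eqI)
    apply (simp_all add: X Y entry_simps del: index_mult_mat)
  apply (simp add: field_simps)
  done

lemma qc_lin:
  assumes X: "X \<in> CM" and Z: "Z \<in> CM" and p: "p \<noteq> 0"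
  shows "qcomm p Z (c \<cdot>\<^sub>m X + d \<cdot>\<^sub>m 1\<^sub>m m) = c \<cdot>\<^sub>m qcomm p Z X + (d*(p - inverse p)) \<cdot>\<^sub>m Z"
  unfolding qcomm_def
  apply (simp add: dnorm X Z)
  apply (rule cm_eqI)
    apply (simp_all add: X Z entry_simps del: index_mult_mat)
  apply (simp add: algebra_simps)
  done

lemma qc_anti:
  assumes X: "X \<in> CM" and Z: "Z \<in> CM" and q: "q \<noteq> 0"
  shows "qcomm (inverse q) Z X = (-1) \<cdot>\<^sub>m qcomm q X Z"
  unfolding qcomm_def
  apply (rule cm_eqI)
    apply (simp_all add: X Z entry_simps del: index_mult_mat)
  done

lemma qc_carrier[simp]: "X \<in> CM \<Longrightarrow> Y \<in> CM \<Longrightarrow> qcomm p X Y \<in> CM"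
  unfolding qcomm_def by simp


lemma core:
  assumes A: "A \<in> CM" and B: "B \<in> CM" and q: "q \<noteq> 0" and pinv: "p = inverse q" and r0: "r0 \<noteq> 0"
    and R2: "al*t*(q - p) = 1" and R3: "be*(q - p) = al*w1"
    and R4: "rh*be = -t*w1" and R5: "al*al*rh = -1"
    and C: "C = al \<cdot>\<^sub>m qcomm q B A + be \<cdot>\<^sub>m 1\<^sub>m m"
    and AW1: "qcomm (p) A (qcomm q A B) = rh \<cdot>\<^sub>m B + w1 \<cdot>\<^sub>m A + (t * w2) \<cdot>\<^sub>m 1\<^sub>m m"
    and AW2: "qcomm (p) B (qcomm q B A) = rh \<cdot>\<^sub>m A + w1 \<cdot>\<^sub>m B + (t * w3) \<cdot>\<^sub>m 1\<^sub>m m"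
  shows "qcomm (p) A (qcomm q A C) = rh \<cdot>\<^sub>m C + w2 \<cdot>\<^sub>m A + (t * w1) \<cdot>\<^sub>m 1\<^sub>m m"
    and "qcomm (p) B (qcomm q B C) = rh \<cdot>\<^sub>m C + w3 \<cdot>\<^sub>m B + (t * w1) \<cdot>\<^sub>m 1\<^sub>m m"
    and "qcomm (p) C (qcomm q C A) = rh \<cdot>\<^sub>m A + w2 \<cdot>\<^sub>m C + (t * w3) \<cdot>\<^sub>m 1\<^sub>m m"
    and "qcomm (p) C (qcomm q C B) = rh \<cdot>\<^sub>m B + w3 \<cdot>\<^sub>m C + (t * w2) \<cdot>\<^sub>m 1\<^sub>m m"
proof -
  have Cc: "C \<in> CM" using A B C by simp
  have iq: "p \<noteq> 0" using q pinv by simp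
  have ip: "inverse p = q" using pinv by simp
  have pq: "q * p = 1" using pinv q by simp
  show "qcomm (p) A (qcomm q A C) = rh \<cdot>\<^sub>m C + w2 \<cdot>\<^sub>m A + (t * w1) \<cdot>\<^sub>m 1\<^sub>m m"
  proof -
    have "qcomm (p) A (qcomm q A C) = al \<cdot>\<^sub>m qcomm q (qcomm (p) A (qcomm q A B)) A - (be*(q - p)^2) \<cdot>\<^sub>m (A*A)"
      unfolding C by (rule L_right[OF A B q, folded pinv])
    also have "\<dots> = al \<cdot>\<^sub>m qcomm q (rh \<cdot>\<^sub>m B + w1 \<cdot>\<^sub>m A + (t * w2) \<cdot>\<^sub>m 1\<^sub>m m) A - (be*(q - p)^2) \<cdot>\<^sub>m (A*A)"
      by (simp only: AW1)
    also have "\<dots> = rh \<cdot>\<^sub>m C + w2 \<cdot>\<^sub>m A + (t * w1) \<cdot>\<^sub>m 1\<^sub>m m"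
      unfolding C qcomm_def
      apply (simp add: dnorm A B)
      apply (rule cm_eqI)
        apply (simp_all add: A B entry_simps pinv[symmetric] del: index_mult_mat index_one_mat)
      using R2 R3 R4 R5 pq by Groebner_Basis.algebra
    finally show ?thesis .
  qed
  show "qcomm (p) B (qcomm q B C) = rh \<cdot>\<^sub>m C + w3 \<cdot>\<^sub>m B + (t * w1) \<cdot>\<^sub>m 1\<^sub>m m"
  proof -
    have "qcomm (p) B (qcomm q B C) = al \<cdot>\<^sub>m qcomm q B (qcomm (p) B (qcomm q B A)) - (be*(q - p)^2) \<cdot>\<^sub>m (B*B)"
      unfolding C by (rule L_left[OF A B q, folded pinv])
    also have "\<dots> = al \<cdot>\<^sub>m qcomm q B (rh \<cdot>\<^sub>m A + w1 \<cdot>\<^sub>m B + (t * w3) \<cdot>\<^sub>m 1\<^sub>m m) - (be*(q - p)^2) \<cdot>\<^sub>m (B*B)"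
      by (simp only: AW2)
    also have "\<dots> = rh \<cdot>\<^sub>m C + w3 \<cdot>\<^sub>m B + (t * w1) \<cdot>\<^sub>m 1\<^sub>m m"
      unfolding C qcomm_def
      apply (simp add: dnorm A B)
      apply (rule cm_eqI)
        apply (simp_all add: A B entry_simps pinv[symmetric] del: index_mult_mat index_one_mat)
      using R2 R3 R4 R5 pq by Groebner_Basis.algebra
    finally show ?thesis .
  qed
  have hAC: "qcomm q A C = (-al*rh) \<cdot>\<^sub>m B + (-al*(t * w2)) \<cdot>\<^sub>m 1\<^sub>m m"
  proof -
    have "qcomm q A C = (-al) \<cdot>\<^sub>m qcomm (p) A (qcomm q A B) + (be*(q - p)) \<cdot>\<^sub>m A"
      unfolding C by (rule comm_AC[OF A B q, folded pinv])
    also have "\<dots> = (-al) \<cdot>\<^sub>m (rh \<cdot>\<^sub>m B + w1 \<cdot>\<^sub>m A + (t * w2) \<cdot>\<^sub>m 1\<^sub>m m) + (be*(q - p)) \<cdot>\<^sub>m A"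
      by (simp only: AW1)
    also have "\<dots> = (-al*rh) \<cdot>\<^sub>m B + (-al*(t * w2)) \<cdot>\<^sub>m 1\<^sub>m m"
      apply (rule cm_eqI)
        apply (simp_all add: A B entry_simps pinv[symmetric] del: index_mult_mat index_one_mat)
      using R2 R3 R4 R5 pq by Groebner_Basis.algebra
    finally show ?thesis .
  qed
  have hCB: "qcomm q C B = (-al*rh) \<cdot>\<^sub>m A + (-al*(t * w3)) \<cdot>\<^sub>m 1\<^sub>m m"
  proof -
    have "qcomm q C B = (-al) \<cdot>\<^sub>m qcomm (p) B (qcomm q B A) + (be*(q - p)) \<cdot>\<^sub>m B"
      unfolding C by (rule comm_CB[OF A B q, folded pinv])
    also have "\<dots> = (-al) \<cdot>\<^sub>m (rh \<cdot>\<^sub>m A + w1 \<cdot>\<^sub>m B + (t * w3) \<cdot>\<^sub>m 1\<^sub>m m) + (be*(q - p)) \<cdot>\<^sub>m B"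
      by (simp only: AW2)
    also have "\<dots> = (-al*rh) \<cdot>\<^sub>m A + (-al*(t * w3)) \<cdot>\<^sub>m 1\<^sub>m m"
      apply (rule cm_eqI)
        apply (simp_all add: A B entry_simps pinv[symmetric] del: index_mult_mat index_one_mat)
      using R2 R3 R4 R5 pq by Groebner_Basis.algebra
    finally show ?thesis .
  qed
  show "qcomm (p) C (qcomm q C A) = rh \<cdot>\<^sub>m A + w2 \<cdot>\<^sub>m C + (t * w3) \<cdot>\<^sub>m 1\<^sub>m m"
  proof -
    have "qcomm (p) C (qcomm q C A) = (-1) \<cdot>\<^sub>m qcomm q C (qcomm q A C)"
      by (rule qc_f'[OF Cc A q, folded pinv])
    also have "\<dots> = (-1) \<cdot>\<^sub>m qcomm q C ((-al*rh) \<cdot>\<^sub>m B + (-al*(t * w2)) \<cdot>\<^sub>m 1\<^sub>m m)"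
      by (simp only: hAC)
    also have "\<dots> = (-1) \<cdot>\<^sub>m ((-al*rh) \<cdot>\<^sub>m qcomm q C B + ((-al*(t * w2))*(q - p)) \<cdot>\<^sub>m C)"
      by (simp only: qc_lin[OF B Cc q, folded pinv])
    also have "\<dots> = (-1) \<cdot>\<^sub>m ((-al*rh) \<cdot>\<^sub>m ((-al*rh) \<cdot>\<^sub>m A + (-al*(t * w3)) \<cdot>\<^sub>m 1\<^sub>m m) + ((-al*(t * w2))*(q - p)) \<cdot>\<^sub>m C)"
      by (simp only: hCB)
    also have "\<dots> = rh \<cdot>\<^sub>m A + w2 \<cdot>\<^sub>m C + (t * w3) \<cdot>\<^sub>m 1\<^sub>m m"
      apply (rule cm_eqI)
        apply (simp_all add: A B Cc entry_simps pinv[symmetric] del: index_mult_mat index_one_mat)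
      using R2 R3 R4 R5 pq by Groebner_Basis.algebra
    finally show ?thesis .
  qed
  show "qcomm (p) C (qcomm q C B) = rh \<cdot>\<^sub>m B + w3 \<cdot>\<^sub>m C + (t * w2) \<cdot>\<^sub>m 1\<^sub>m m"
  proof -
    have "qcomm (p) C (qcomm q C B) = qcomm (p) C ((-al*rh) \<cdot>\<^sub>m A + (-al*(t * w3)) \<cdot>\<^sub>m 1\<^sub>m m)"
      by (simp only: hCB)
    also have "\<dots> = (-al*rh) \<cdot>\<^sub>m qcomm (p) C A + ((-al*(t * w3))*(p - q)) \<cdot>\<^sub>m C"
      by (simp only: qc_lin[OF A Cc iq, unfolded ip])
    also have "\<dots> = (-al*rh) \<cdot>\<^sub>m ((-1) \<cdot>\<^sub>m qcomm q A C) + ((-al*(t * w3))*(p - q)) \<cdot>\<^sub>m C"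
      by (simp only: qc_anti[OF A Cc q, folded pinv])
    also have "\<dots> = (-al*rh) \<cdot>\<^sub>m ((-1) \<cdot>\<^sub>m ((-al*rh) \<cdot>\<^sub>m B + (-al*(t * w2)) \<cdot>\<^sub>m 1\<^sub>m m)) + ((-al*(t * w3))*(p - q)) \<cdot>\<^sub>m C"
      by (simp only: hAC)
    also have "\<dots> = rh \<cdot>\<^sub>m B + w3 \<cdot>\<^sub>m C + (t * w2) \<cdot>\<^sub>m 1\<^sub>m m"
      apply (rule cm_eqI)
        apply (simp_all add: A B Cc entry_simps pinv[symmetric] del: index_mult_mat index_one_mat)
      using R2 R3 R4 R5 pq by Groebner_Basis.algebra
    finally show ?thesis .
  qed
qed

end

lemma omega_sym: "omega q r0 n bb cc a b c = omega q r0 n bb cc b a c"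
  unfolding omega_def by (simp add: mult.commute)

lemma rels:
  fixes q r0 w1 :: complex
  assumes q: "q \<noteq> 0" and r0: "r0 \<noteq> 0" and E: "q - inverse q \<noteq> 0" and D: "q^2 - inverse q ^ 2 \<noteq> 0"
  shows "(r0 / (q^2 - inverse q ^ 2)) * ((q + inverse q) / r0) * (q - inverse q) = 1"
    and "(r0 * w1 / ((q - inverse q) * (q^2 - inverse q ^ 2))) * (q - inverse q) = (r0 / (q^2 - inverse q ^ 2)) * w1"
    and "(- ((q^2 - inverse q ^ 2)^2 / r0^2)) * (r0 * w1 / ((q - inverse q) * (q^2 - inverse q ^ 2))) = - ((q + inverse q) / r0) * w1"
    and "(r0 / (q^2 - inverse q ^ 2)) * (r0 / (q^2 - inverse q ^ 2)) * (- ((q^2 - inverse q ^ 2)^2 / r0^2)) = -1"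
proof -
  have e: "q^2 - inverse q ^ 2 = (q + inverse q) * (q - inverse q)" by (simp add: algebra_simps power2_eq_square)
  define Dv where "Dv = q^2 - inverse q ^ 2"
  define Ev where "Ev = q - inverse q"
  define Sv where "Sv = q + inverse q"
  have e': "Dv = Sv * Ev" unfolding Dv_def Sv_def Ev_def by (rule e)
  have D': "Dv \<noteq> 0" using D Dv_def by simp
  have E': "Ev \<noteq> 0" using E Ev_def by simp
  have S': "Sv \<noteq> 0" using D' e' by auto
  show "(r0 / (q^2 - inverse q ^ 2)) * ((q + inverse q) / r0) * (q - inverse q) = 1"
    unfolding Dv_def[symmetric] Ev_def[symmetric] Sv_def[symmetric] using D' E' r0 e' by (simp add: field_simps)
  show "(r0 * w1 / ((q - inverse q) * (q^2 - inverse q ^ 2))) * (q - inverse q) = (r0 / (q^2 - inverse q ^ 2)) * w1"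
    unfolding Dv_def[symmetric] Ev_def[symmetric] Sv_def[symmetric] using D' E' r0 e' by (simp add: field_simps)
  show "(- ((q^2 - inverse q ^ 2)^2 / r0^2)) * (r0 * w1 / ((q - inverse q) * (q^2 - inverse q ^ 2))) = - ((q + inverse q) / r0) * w1"
    unfolding Dv_def[symmetric] Ev_def[symmetric] Sv_def[symmetric] using D' E' r0 e' by (simp add: field_simps power2_eq_square)
  show "(r0 / (q^2 - inverse q ^ 2)) * (r0 / (q^2 - inverse q ^ 2)) * (- ((q^2 - inverse q ^ 2)^2 / r0^2)) = -1"
    unfolding Dv_def[symmetric] using D' r0 by (simp add: field_simps power2_eq_square)
qed

theorem mainTheorem1:
  fixes q r0 :: complex and n :: nat
    and bb cc :: "label \<Rightarrow> complex"
    and A As :: "complex mat"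
  assumes q_nz: "q \<noteq> 0"
    and q_not_root: "\<forall>k::nat. k > 0 \<longrightarrow> q ^ k \<noteq> 1"
    and r0_nz: "r0 \<noteq> 0"
    and bb_nz: "\<forall>a. bb a \<noteq> 0" and cc_nz: "\<forall>a. cc a \<noteq> 0"
    and bc: "\<forall>a. bb a * cc a = inverse (r0 ^ 2)"
    and A_dim: "A \<in> carrier_mat (n+1) (n+1)"
    and As_dim: "As \<in> carrier_mat (n+1) (n+1)"
    and AW1: "qcomm (inverse q) A (qcomm q A As)
       = (- ((q^2 - inverse q ^ 2)^2 / r0^2)) \<cdot>\<^sub>m As
         + omega q r0 n bb cc Dot Star Diamond \<cdot>\<^sub>m A
         + ((q + inverse q) / r0 * omega q r0 n bb cc Dot Diamond Star) \<cdot>\<^sub>m 1\<^sub>m (n+1)"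
    and AW2: "qcomm (inverse q) As (qcomm q As A)
       = (- ((q^2 - inverse q ^ 2)^2 / r0^2)) \<cdot>\<^sub>m A
         + omega q r0 n bb cc Dot Star Diamond \<cdot>\<^sub>m As
         + ((q + inverse q) / r0 * omega q r0 n bb cc Star Diamond Dot) \<cdot>\<^sub>m 1\<^sub>m (n+1)"
  shows "\<forall>a b c. distinct [a, b, c] \<longrightarrow>
     qcomm (inverse q) (Alab q r0 n bb cc A As a) (qcomm q (Alab q r0 n bb cc A As a) (Alab q r0 n bb cc A As b))
       = (- ((q^2 - inverse q ^ 2)^2 / r0^2)) \<cdot>\<^sub>m Alab q r0 n bb cc A As b
         + omega q r0 n bb cc a b c \<cdot>\<^sub>m Alab q r0 n bb cc A As a
         + ((q + inverse q) / r0 * omega q r0 n bb cc a c b) \<cdot>\<^sub>m 1\<^sub>m (n+1)"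
proof -
  have q2: "q ^ 2 \<noteq> 1" using q_not_root by auto
  have q4: "q ^ 4 \<noteq> 1" using q_not_root by auto
  have E: "q - inverse q \<noteq> 0"
  proof
    assume "q - inverse q = 0"
    then have "q * q = 1" using q_nz by (simp add: field_simps)
    then show False using q2 by (simp add: power2_eq_square)
  qed
  have D: "q^2 - inverse q ^ 2 \<noteq> 0"
  proof
    assume "q^2 - inverse q ^ 2 = 0"
    then have "q^2 * q^2 = 1" using q_nz by (simp add: field_simps)
    then have "q^4 = 1" by (simp add: power_add[symmetric])
    then show False using q4 by simp
  qed
  note R = rels[OF q_nz r0_nz E D]
  note co = core[OF A_dim As_dim q_nz refl r0_nz R Adiamond_def AW1 AW2]
  have s1: "omega q r0 n bb cc Star Dot Diamond = omega q r0 n bb cc Dot Star Diamond" by (rule omega_sym)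
  have s2: "omega q r0 n bb cc Diamond Dot Star = omega q r0 n bb cc Dot Diamond Star" by (rule omega_sym)
  have s3: "omega q r0 n bb cc Diamond Star Dot = omega q r0 n bb cc Star Diamond Dot" by (rule omega_sym)
  show ?thesis
  proof (intro allI impI)
    fix a b c :: label assume dist: "distinct [a, b, c]"
    show "qcomm (inverse q) (Alab q r0 n bb cc A As a) (qcomm q (Alab q r0 n bb cc A As a) (Alab q r0 n bb cc A As b))
       = (- ((q^2 - inverse q ^ 2)^2 / r0^2)) \<cdot>\<^sub>m Alab q r0 n bb cc A As b
         + omega q r0 n bb cc a b c \<cdot>\<^sub>m Alab q r0 n bb cc A As a
         + ((q + inverse q) / r0 * omega q r0 n bb cc a c b) \<cdot>\<^sub>m 1\<^sub>m (n+1)"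
      using dist
      by (cases a; cases b; cases c; simp only: Alab_def label.case s1 s2 s3 AW1 AW2 co distinct.simps list.set; simp)
  qed
qed

end
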